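(* If $g(t)^{-1}\log G(t)\to0$ as $t\to\infty$, then for all $c>0$, $\int_0^\infty e^{-cg(t)}\,\mathrm{d}t<\infty$.
   Context: The function $g:[0,\infty)\to(0,\infty)$ is $C^1$ and non-decreasing, and $G(t)=\int_0^tg(s)\,\mathrm{d}s$. *)

theory Defs
  imports "HOL-Analysis.Analysis"
begin

end

theory Submission
  imports Defs
begin

theorem mainTheorem18:
  fixes g G :: "real \<Rightarrow> real"
  assumes C1: "g C1_differentiable_on {0..}"
    and pos: "\<And>t. t \<ge> 0 \<Longrightarrow> g t > 0"
    and mono: "mono_on {0..} g"
    and G_def: "\<And>t. t \<ge> 0 \<Longrightarrow> G t = integral {0..t} g"
    and lim: "((\<lambda>t. ln (G t) / g t) \<longlongrightarrow> 0) at_top"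
  shows "\<forall>c>0. (\<lambda>t. exp (- c * g t)) integrable_on {0..}"
proof (intro allI impI)
  fix c :: real assume c: "c > 0"
  have cont: "continuous_on {0..} g"
    using C1 C1_differentiable_imp_continuous_on by blast
  define a where "a = g 0"
  have a: "a > 0" using pos a_def by simp
  have Gge: "G t \<ge> a * t" if t: "t \<ge> 0" for t
  proof -
    have "integral {0..t} (\<lambda>_. a) \<le> integral {0..t} g"
    proof (rule integral_le)
      show "g integrable_on {0..t}"
        by (rule integrable_continuous_interval, rule continuous_on_subset[OF cont]) auto
      show "x \<in> {0..t} \<Longrightarrow> a \<le> g x" for x
        using mono unfolding a_def mono_on_def by auto
    qed auto
    then show ?thesis using t G_def by (simp add: mult.commute)
  qed
  have "\<forall>\<^sub>F t in at_top. \<bar>ln (G t) / g t\<bar> < c/2"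
    using lim c unfolding tendsto_iff dist_real_def by (auto dest!: spec[of _ "c/2"])
  moreover have "\<forall>\<^sub>F t in at_top. t \<ge> (1::real)" by (rule eventually_ge_at_top)
  ultimately have "\<forall>\<^sub>F t in at_top. \<bar>ln (G t) / g t\<bar> < c/2 \<and> t \<ge> 1"
    by (rule eventually_conj)
  then obtain T where T: "\<And>t. t \<ge> T \<Longrightarrow> \<bar>ln (G t) / g t\<bar> < c/2 \<and> t \<ge> 1"
    by (auto simp: eventually_at_top_linorder)
  have T1: "T \<ge> 1" using T by auto
  have bound: "exp (- c * g t) \<le> (1 / a^2) * t powr (-2)" if t: "t \<ge> T" for t
  proof -
    have t1: "t \<ge> 1" using T t by auto
    have gt: "g t > 0" using pos t1 by auto
    have Gpos: "G t \<ge> a * t" "a * t > 0" using Gge[of t] t1 a by auto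
    have "ln (G t) / g t < c/2" using T[OF t] abs_ge_self[of "ln (G t) / g t"] by linarith
    hence "ln (G t) < c/2 * g t" using gt by (simp add: divide_less_eq)
    hence Glt: "G t < exp (c/2 * g t)" using Gpos
      by (metis exp_less_mono exp_ln less_le_trans)
    have "exp (- c * g t) = 1 / (exp (c/2 * g t))^2"
      by (simp add: exp_minus power2_eq_square flip: exp_add field_simps)
    also have "\<dots> \<le> 1 / (a * t)^2"
      using Gpos Glt by (intro divide_left_mono power_mono mult_pos_pos) auto
    also have "\<dots> = (1 / a^2) * t powr (-2)"
      using t1 by (simp add: powr_minus powr_realpow power_mult_distrib field_simps)
    finally show ?thesis .
  qed
  have cont2: "continuous_on {0..} (\<lambda>t. exp (- c * g t))"
    by (intro continuous_intros cont)
  have I1: "(\<lambda>t. exp (- c * g t)) integrable_on {0..T}"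
    by (rule integrable_continuous_interval, rule continuous_on_subset[OF cont2]) auto
  have I2: "(\<lambda>t. exp (- c * g t)) integrable_on {T..}"
  proof (rule measurable_bounded_by_integrable_imp_integrable_real)
    show "(\<lambda>t. exp (- c * g t)) \<in> borel_measurable (lebesgue_on {T..})"
      by (rule continuous_imp_measurable_on_sets_lebesgue, rule continuous_on_subset[OF cont2])
         (use T1 in auto)
    show "(\<lambda>t. (1 / a^2) * t powr (-2)) integrable_on {T..}"
    proof -
      have "((\<lambda>x. x powr (-2)) has_integral - (T powr (- 2 + 1)) / (- 2 + 1)) {T..}"
        using T1 by (intro has_integral_powr_to_inf) auto
      then have "(\<lambda>t. t powr (-2)) integrable_on {T..}" by (auto simp: integrable_on_def)
      then show ?thesis using a by simp
    qed
    show "\<bar>exp (- c * g t)\<bar> \<le> (1 / a^2) * t powr (-2)" if "t \<in> {T..}" for t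
      using bound that by simp
  qed auto
  show "(\<lambda>t. exp (- c * g t)) integrable_on {0..}"
  proof (rule integrable_Un'[OF I1 I2])
    show "negligible ({0..T} \<inter> {T..})"
      by (rule negligible_subset[of "{T}"]) auto
    show "{0..} = {0..T} \<union> {T..}" using T1 by auto
  qed
qed

end
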